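(* Let $1\le s\le n-1$ and ${\bf v}^s=(\frac1s,\dots,\frac1s,0,\dots,0)$ (with $s$ prizes equal to $1/s$). If $s<n/2$, then $M({\bf v}^s,\theta)$ and hence the equilibrium effort $x^*({\bf v}^s,\theta)$ are decreasing in $\theta\in[0,1]$; if $s>n/2$, they are increasing in $\theta\in[0,1]$.
   Context: Fix an integer $n\ge 2$ and a noise distribution with cdf $F$ and density $f$ on $\mathbb R$ (integrals finite). For $r=1,\dots,n$ let $g_r(u)=u^{n-r}(1-u)^{r-1}$ and $\beta_r=\binom{n-1}{r-1}\int g_r'(F(t))f(t)^2dt$; $B_r=\sum_{k=1}^r\beta_k$, which for $1\le r\le n-1$ equals $r\binom{n-1}{r}\int F(t)^{n-1-r}[1-F(t)]^{r-1}f(t)^2dt>0$. For prize vectors ${\bf v}$ ($v_1\ge\dots\ge v_n\ge0$, $\sum v_r=1$) let $R({\bf v})=\sum_r\beta_rv_r$, $L({\bf v})=-\frac1n\sum_{r=1}^n\sum_{s<r}(\beta_r+\beta_s)(v_s-v_r)$, $M({\bf v},\theta)=R({\bf v})+\theta L({\bf v})$, $\theta\in[0,1]$. The effort cost $c$ is strictly increasing, differentiable and strictly convex on $[0,\bar x]$, $\bar x=c^{-1}(1)$, with $c(0)=c'(0)=0$; the symmetric equilibrium effort $x^*({\bf v},\theta)$ solves $c'(x^* )=M({\bf v},\theta)$. *)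

theory Defs
  imports "HOL-Analysis.Analysis"
begin

definition strict_convex_on_real :: "real set \<Rightarrow> (real \<Rightarrow> real) \<Rightarrow> bool" where
  "strict_convex_on_real S c \<longleftrightarrow>
     (\<forall>x\<in>S. \<forall>y\<in>S. x \<noteq> y \<longrightarrow>
        (\<forall>t. 0 < t \<and> t < 1 \<longrightarrow> c ((1 - t) * x + t * y) < (1 - t) * c x + t * c y))"

definition g :: "nat \<Rightarrow> nat \<Rightarrow> real \<Rightarrow> real" where
  "g n r u = u ^ (n - r) * (1 - u) ^ (r - 1)"

definition beta :: "nat \<Rightarrow> (real \<Rightarrow> real) \<Rightarrow> (real \<Rightarrow> real) \<Rightarrow> nat \<Rightarrow> real" where
  "beta n F f r = real ((n - 1) choose (r - 1)) *
     (\<integral>t. deriv (g n r) (F t) * (f t)\<^sup>2 \<partial>lborel)"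

definition R :: "nat \<Rightarrow> (real \<Rightarrow> real) \<Rightarrow> (real \<Rightarrow> real) \<Rightarrow> (nat \<Rightarrow> real) \<Rightarrow> real" where
  "R n F f v = (\<Sum>r=1..n. beta n F f r * v r)"

definition L :: "nat \<Rightarrow> (real \<Rightarrow> real) \<Rightarrow> (real \<Rightarrow> real) \<Rightarrow> (nat \<Rightarrow> real) \<Rightarrow> real" where
  "L n F f v = - (1 / real n) *
     (\<Sum>r=1..n. \<Sum>q=1..<r. (beta n F f r + beta n F f q) * (v q - v r))"

definition M :: "nat \<Rightarrow> (real \<Rightarrow> real) \<Rightarrow> (real \<Rightarrow> real) \<Rightarrow> (nat \<Rightarrow> real) \<Rightarrow> real \<Rightarrow> real" where
  "M n F f v \<theta> = R n F f v + \<theta> * L n F f v"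

definition vs :: "nat \<Rightarrow> nat \<Rightarrow> real" where
  "vs s r = (if 1 \<le> r \<and> r \<le> s then 1 / real s else 0)"

end

theory Submission
  imports Defs
begin


lemma strict_imp_convex:
  assumes "strict_convex_on_real {0..b} c"
  shows "convex_on {0..b} c"
proof (rule convex_onI)
  fix t x y :: real assume t: "t > 0" "t < 1" and xy: "x \<in> {0..b}" "y \<in> {0..b}"
  show "c ((1 - t) *\<^sub>R x + t *\<^sub>R y) \<le> (1 - t) * c x + t * c y"
  proof (cases "x = y")
    case True then show ?thesis by (simp add: algebra_simps)
  next
    case False then show ?thesis using assms t xy unfolding strict_convex_on_real_def
      by (metis less_eq_real_def real_scaleR_def)
  qed
qed (simp)

lemma lim_ne:
  fixes x b :: real assumes "x \<in> {0..b}" "0 < b"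
  shows "at x within {0..b} \<noteq> bot"
proof -
  have "x islimpt {0..b}" using assms islimpt_Icc by blast
  then show ?thesis using trivial_limit_within by blast
qed

lemma cderiv_mono:
  fixes c c' :: "real \<Rightarrow> real"
  assumes conv: "convex_on {0..b} c"
    and der: "\<forall>x\<in>{0..b}. (c has_real_derivative c' x) (at x within {0..b})"
    and x: "x \<in> {0..b}" and y: "y \<in> {0..b}" and xy: "x < y"
  shows "c' x \<le> c' y"
proof -
  define S where "S = (c y - c x) / (y - x)"
  have b: "0 < b" using x y xy by auto
  have 1: "c' x \<le> S"
  proof (rule tendsto_upperbound)
    show "((\<lambda>z. (c z - c x) / (z - x)) \<longlongrightarrow> c' x) (at x within {0..b})"
      using der x has_field_derivative_iff by blast
    show "at x within {0..b} \<noteq> bot" using lim_ne x b by blast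
    show "\<forall>\<^sub>F z in at x within {0..b}. (c z - c x) / (z - x) \<le> S"
      unfolding eventually_at
    proof (intro exI[of _ "y - x"] conjI ballI impI)
      show "0 < y - x" using xy by simp
      fix z assume z: "z \<in> {0..b}" "z \<noteq> x \<and> dist z x < y - x"
      show "(c z - c x) / (z - x) \<le> S"
      proof (cases "z < x")
        case True
        from convex_on_slope_le[OF conv z(1) y True xy]
        show ?thesis unfolding S_def by (smt (verit) minus_divide_divide)
      next
        case False
        then have zx: "x < z" "z < y" using z by (auto simp: dist_real_def)
        from convex_on_slope_le(1)[OF conv x y zx]
        show ?thesis unfolding S_def by (smt (verit) minus_divide_divide)
      qed
    qed
  qed
  have 2: "S \<le> c' y"
  proof (rule tendsto_lowerbound)
    show "((\<lambda>z. (c z - c y) / (z - y)) \<longlongrightarrow> c' y) (at y within {0..b})"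
      using der y has_field_derivative_iff by blast
    show "at y within {0..b} \<noteq> bot" using lim_ne y b by blast
    show "\<forall>\<^sub>F z in at y within {0..b}. S \<le> (c z - c y) / (z - y)"
      unfolding eventually_at
    proof (intro exI[of _ "y - x"] conjI ballI impI)
      show "0 < y - x" using xy by simp
      fix z assume z: "z \<in> {0..b}" "z \<noteq> y \<and> dist z y < y - x"
      show "S \<le> (c z - c y) / (z - y)"
      proof (cases "z < y")
        case True
        then have zx: "x < z" "z < y" using z by (auto simp: dist_real_def)
        from convex_on_slope_le(2)[OF conv x y zx]
        show ?thesis unfolding S_def by (smt (verit) minus_divide_divide)
      next
        case False
        then have "y < z" using z by auto
        from convex_on_slope_le[OF conv x z(1) xy this]
        show ?thesis unfolding S_def by (smt (verit) minus_divide_divide)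
      qed
    qed
  qed
  from 1 2 show ?thesis by linarith
qed


definition gd :: "nat \<Rightarrow> nat \<Rightarrow> real \<Rightarrow> real" where
  "gd n r u = real (n - r) * u ^ (n - r - 1) * (1 - u) ^ (r - 1)
     - real (r - 1) * u ^ (n - r) * (1 - u) ^ (r - 2)"

definition TT :: "nat \<Rightarrow> nat \<Rightarrow> real \<Rightarrow> real" where
  "TT n k u = real k * real ((n - 1) choose k) * u ^ (n - 1 - k) * (1 - u) ^ (k - 1)"

lemma deriv_g: "deriv (g n r) u = gd n r u"
proof (rule DERIV_imp_deriv)
  have e: "g n r = (\<lambda>u. u ^ (n - r) * (1 - u) ^ (r - 1))" by (simp add: g_def fun_eq_iff)
  show "(g n r has_real_derivative gd n r u) (at u)"
    unfolding e gd_def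
    by (rule derivative_eq_intros refl | simp)+ (simp add: algebra_simps numeral_2_eq_2 diff_diff_left)
qed

lemma binom_id: "1 \<le> r \<Longrightarrow> real ((n - 1) choose (r - 1)) * real (n - r) = real r * real ((n - 1) choose r)"
proof -
  assume r: "1 \<le> r"
  have a: "(n - 1 - (r - 1)) * ((n - 1) choose (r - 1)) = (n - 1) * ((n - 1 - 1) choose (r - 1))"
    by (rule binomial_absorb_comp)
  have b: "Suc (r - 1) * ((n - 1) choose Suc (r - 1)) = (n - 1) * ((n - 1 - 1) choose (r - 1))"
    by (rule binomial_absorption)
  have c: "Suc (r - 1) = r" "n - 1 - (r - 1) = n - r" using r by auto
  from a b c have "(n - r) * ((n - 1) choose (r - 1)) = r * ((n - 1) choose r)" by simp
  then show ?thesis by (metis mult.commute of_nat_mult)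
qed

lemma tele: "1 \<le> r \<Longrightarrow> real ((n - 1) choose (r - 1)) * gd n r u = TT n r u - TT n (r - 1) u"
proof -
  assume r: "1 \<le> r"
  have e1: "n - 1 - (r - 1) = n - r" "r - 1 - 1 = r - 2" "n - r - 1 = n - 1 - r" using r by auto
  have "real ((n - 1) choose (r - 1)) * gd n r u =
     (real ((n - 1) choose (r - 1)) * real (n - r)) * u ^ (n - r - 1) * (1 - u) ^ (r - 1)
     - real (r - 1) * real ((n - 1) choose (r - 1)) * u ^ (n - r) * (1 - u) ^ (r - 2)"
    by (simp add: gd_def algebra_simps)
  also have "\<dots> = TT n r u - TT n (r - 1) u"
    unfolding binom_id[OF r] TT_def e1 by simp
  finally show ?thesis .
qed

lemma sum_tele: "(\<Sum>r=1..s. real ((n - 1) choose (r - 1)) * gd n r u) = TT n s u"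
proof (induction s)
  case 0 then show ?case by (simp add: TT_def)
next
  case (Suc s)
  have "(\<Sum>r=1..Suc s. real ((n - 1) choose (r - 1)) * gd n r u)
     = TT n s u + real ((n - 1) choose (Suc s - 1)) * gd n (Suc s) u"
    using Suc by simp
  also have "\<dots> = TT n (Suc s) u" using tele[of "Suc s" n u] by simp
  finally show ?case .
qed

lemma TT_n: "TT n n u = 0" by (cases n) (simp_all add: TT_def)

lemma double_sum:
  fixes b :: "nat \<Rightarrow> real"
  assumes s: "1 \<le> s" "s < n"
  shows "(\<Sum>r=1..n. \<Sum>q=1..<r. (b r + b q) * (vs s q - vs s r))
     = (\<Sum>r=1..n. b r) - (\<Sum>r=1..s. b r) + real (n - s) * (\<Sum>r=1..s. b r) / real s"
proof -
  have split: "{1..n} = {1..s} \<union> {s<..n}" using s by auto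
  have A: "(\<Sum>r\<in>{1..s}. \<Sum>q=1..<r. (b r + b q) * (vs s q - vs s r)) = 0"
    by (intro sum.neutral ballI) (auto simp: vs_def)
  have B: "(\<Sum>q=1..<r. (b r + b q) * (vs s q - vs s r)) = b r + (\<Sum>q=1..s. b q) / real s"
    if r: "r \<in> {s<..n}" for r
  proof -
    have sp: "{1..<r} = {1..s} \<union> {s<..<r}" using r by auto
    have z: "(\<Sum>q\<in>{s<..<r}. (b r + b q) * (vs s q - vs s r)) = 0"
      by (intro sum.neutral ballI) (auto simp: vs_def)
    have "(\<Sum>q=1..<r. (b r + b q) * (vs s q - vs s r)) = (\<Sum>q=1..s. (b r + b q) * (1 / real s))"
      unfolding sp using r z by (subst sum.union_disjoint) (auto simp: vs_def intro!: sum.cong)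
    also have "\<dots> = b r + (\<Sum>q=1..s. b q) / real s"
    proof -
      have ns: "real s \<noteq> 0" using s by simp
      have "(\<Sum>q=1..s. (b r + b q) * (1 / real s)) = (\<Sum>q=1..s. b r / real s) + (\<Sum>q=1..s. b q / real s)"
        by (simp add: sum.distrib add_divide_distrib)
      also have "\<dots> = b r + (\<Sum>q=1..s. b q) / real s" using ns by (simp add: sum_divide_distrib)
      finally show ?thesis .
    qed
    finally show ?thesis .
  qed
  have "(\<Sum>r=1..n. \<Sum>q=1..<r. (b r + b q) * (vs s q - vs s r))
      = (\<Sum>r\<in>{s<..n}. b r + (\<Sum>q=1..s. b q) / real s)"
    unfolding split using A B by (subst sum.union_disjoint) auto
  also have "\<dots> = (\<Sum>r\<in>{s<..n}. b r) + real (n - s) * (\<Sum>q=1..s. b q) / real s"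
    by (simp add: sum.distrib)
  also have "(\<Sum>r\<in>{s<..n}. b r) = (\<Sum>r=1..n. b r) - (\<Sum>r=1..s. b r)"
    unfolding split by (subst sum.union_disjoint) auto
  finally show ?thesis by simp
qed

lemma R_vs: assumes "1 \<le> s" "s \<le> n"
  shows "(\<Sum>r=1..n. b r * vs s r) = (\<Sum>r=1..s. b r) / real s"
proof -
  have "(\<Sum>r=1..n. b r * vs s r) = (\<Sum>r=1..s. b r * (1 / real s))"
    using assms by (intro sum.mono_neutral_cong_right) (auto simp: vs_def)
  then show ?thesis by (simp add: sum_divide_distrib)
qed


locale dens =
  fixes F f :: "real \<Rightarrow> real"
  assumes f_meas: "f \<in> borel_measurable lborel"
    and f_nonneg: "\<forall>t. 0 \<le> f t"
    and f_int: "integrable lborel f"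
    and f_total: "(\<integral>t. f t \<partial>lborel) = 1"
    and F_cdf: "\<forall>x. F x = (LINT t:{..x}|lborel. f t)"
begin

lemma F_ind: "F x = (\<integral>t. indicator {..x} t *\<^sub>R f t \<partial>lborel)"
  using F_cdf by (simp add: set_lebesgue_integral_def)

lemma int_ind: "integrable lborel (\<lambda>t. indicator A t *\<^sub>R f t)" if "A \<in> sets lborel"
  using integrable_mult_indicator[OF that f_int] .

lemma F_nonneg: "0 \<le> F x"
  unfolding F_ind by (rule integral_nonneg_AE) (auto simp: f_nonneg indicator_def)

lemma F_mono: "x \<le> y \<Longrightarrow> F x \<le> F y"
  unfolding F_ind
  by (rule integral_mono[OF int_ind int_ind]) (auto simp: f_nonneg indicator_def)

lemma F_le1: "F x \<le> 1"
proof -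
  have "F x \<le> (\<integral>t. f t \<partial>lborel)" unfolding F_ind
    by (rule integral_mono[OF int_ind f_int]) (auto simp: f_nonneg indicator_def)
  then show ?thesis using f_total by simp
qed

lemma F_meas: "F \<in> borel_measurable lborel"
proof -
  have "mono F" using F_mono by (auto simp: mono_def)
  then have "F \<in> borel_measurable borel" by (rule borel_measurable_mono)
  then show ?thesis by simp
qed

lemma Z0: "AE t in lborel. F t = 0 \<longrightarrow> f t = 0"
proof -
  define Q where "Q = {q \<in> \<rat>. F q = 0}"
  define G where "G = {t. F t = 0 \<and> (\<forall>t'. F t' = 0 \<longrightarrow> t' \<le> t)}"
  have cQ: "countable Q" unfolding Q_def using countable_rat by (rule countable_subset[rotated]) auto
  have fG: "finite G"
  proof -
    have "G \<subseteq> {x}" if "x \<in> G" for x using that by (auto simp: G_def intro: order.antisym)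
    then have "G = {} \<or> (\<exists>x. G \<subseteq> {x})" by blast
    then show ?thesis using finite_subset by blast
  qed
  have H: "\<forall>q\<in>Q. AE t in lborel. t \<le> q \<longrightarrow> f t = 0"
  proof
    fix q assume q: "q \<in> Q"
    have "(\<integral>t. indicator {..q} t *\<^sub>R f t \<partial>lborel) = 0" using q F_ind by (simp add: Q_def)
    moreover have i0: "integrable lborel (\<lambda>t. indicator {..q} t *\<^sub>R f t)" by (rule int_ind) simp
    moreover have "AE t in lborel. 0 \<le> indicator {..q} t *\<^sub>R f t"
      by (rule AE_I2) (simp add: f_nonneg indicator_def)
    ultimately have "AE t in lborel. indicator {..q} t *\<^sub>R f t = 0"
      using integral_nonneg_eq_0_iff_AE by blast
    then show "AE t in lborel. t \<le> q \<longrightarrow> f t = 0"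
      by eventually_elim (auto simp: indicator_def)
  qed
  have A1: "AE t in lborel. \<forall>q\<in>Q. t \<le> q \<longrightarrow> f t = 0"
    using AE_ball_countable'[where I=Q and M=lborel and P="\<lambda>q t. t \<le> q \<longrightarrow> f t = 0", OF _ cQ] H by simp
  have A2: "AE t in lborel. t \<notin> G"
    by (rule AE_not_in) (rule finite_imp_null_set_lborel[OF fG])
  from A1 A2 show ?thesis
  proof eventually_elim
    case (elim t)
    show ?case
    proof
      assume Ft: "F t = 0"
      then obtain t' where t': "F t' = 0" "t < t'" using elim(2) unfolding G_def by force
      obtain q where q: "q \<in> \<rat>" "t < q" "q < t'" using Rats_dense_in_real[OF t'(2)] by blast
      have "F q = 0" using F_mono[of q t'] F_nonneg[of q] q t' by simp
      then have "q \<in> Q" using q by (simp add: Q_def)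
      then show "f t = 0" using elim(1) q(2) by force
    qed
  qed
qed

lemma Z1: "AE t in lborel. F t = 1 \<longrightarrow> f t = 0"
proof -
  define Q where "Q = {q \<in> \<rat>. F q = 1}"
  define G where "G = {t. F t = 1 \<and> (\<forall>t'. F t' = 1 \<longrightarrow> t \<le> t')}"
  have cQ: "countable Q" unfolding Q_def using countable_rat by (rule countable_subset[rotated]) auto
  have fG: "finite G"
  proof -
    have "G \<subseteq> {x}" if "x \<in> G" for x using that by (auto simp: G_def intro: order.antisym)
    then have "G = {} \<or> (\<exists>x. G \<subseteq> {x})" by blast
    then show ?thesis using finite_subset by blast
  qed
  have H: "\<forall>q\<in>Q. AE t in lborel. q < t \<longrightarrow> f t = 0"
  proof
    fix q assume q: "q \<in> Q"
    have i: "integrable lborel (\<lambda>t. f t - indicator {..q} t *\<^sub>R f t)"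
      by (intro Bochner_Integration.integrable_diff f_int int_ind) simp
    have "(\<integral>t. f t - indicator {..q} t *\<^sub>R f t \<partial>lborel) = 1 - F q"
      using F_ind f_total by (subst Bochner_Integration.integral_diff[OF f_int int_ind]) auto
    also have "\<dots> = 0" using q by (simp add: Q_def)
    finally have "AE t in lborel. f t - indicator {..q} t *\<^sub>R f t = 0"
      by (subst integral_nonneg_eq_0_iff_AE[symmetric, OF i]) (auto simp: f_nonneg indicator_def)
    then show "AE t in lborel. q < t \<longrightarrow> f t = 0"
      by eventually_elim (auto simp: indicator_def)
  qed
  have A1: "AE t in lborel. \<forall>q\<in>Q. q < t \<longrightarrow> f t = 0"
    using AE_ball_countable'[where I=Q and M=lborel and P="\<lambda>q t. q < t \<longrightarrow> f t = 0", OF _ cQ] H by simp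
  have A2: "AE t in lborel. t \<notin> G"
    by (rule AE_not_in) (rule finite_imp_null_set_lborel[OF fG])
  from A1 A2 show ?thesis
  proof eventually_elim
    case (elim t)
    show ?case
    proof
      assume Ft: "F t = 1"
      then obtain t' where t': "F t' = 1" "t' < t" using elim(2) unfolding G_def by force
      obtain q where q: "q \<in> \<rat>" "t' < q" "q < t" using Rats_dense_in_real[OF t'(2)] by blast
      have "F q = 1" using F_mono[of t' q] F_le1[of q] q t' by simp
      then have "q \<in> Q" using q by (simp add: Q_def)
      then show "f t = 0" using elim(1) q by auto
    qed
  qed
qed

lemma pos:
  assumes f2: "integrable lborel (\<lambda>t. (f t)\<^sup>2)"
  shows "0 < (\<integral>t. F t ^ a * (1 - F t) ^ b * (f t)\<^sup>2 \<partial>lborel)"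
proof -
  have Fm[measurable]: "F \<in> borel_measurable lborel" by (rule F_meas)
  note [measurable] = f_meas
  have i: "integrable lborel (\<lambda>t. F t ^ a * (1 - F t) ^ b * (f t)\<^sup>2)"
  proof (rule Bochner_Integration.integrable_bound[OF f2])
    show "(\<lambda>t. F t ^ a * (1 - F t) ^ b * (f t)\<^sup>2) \<in> borel_measurable lborel" by measurable
    show "AE x in lborel. norm (F x ^ a * (1 - F x) ^ b * (f x)\<^sup>2) \<le> norm ((f x)\<^sup>2)"
    proof (rule AE_I2)
      fix x
      have "0 \<le> F x ^ a" "F x ^ a \<le> 1" "0 \<le> (1 - F x) ^ b" "(1 - F x) ^ b \<le> 1"
        using F_nonneg[of x] F_le1[of x] by (auto intro: power_le_one)
      then have "\<bar>F x ^ a * (1 - F x) ^ b\<bar> \<le> 1"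
        by (simp add: abs_mult mult_le_one)
      then show "norm (F x ^ a * (1 - F x) ^ b * (f x)\<^sup>2) \<le> norm ((f x)\<^sup>2)"
        by (simp add: abs_mult mult_left_le_one_le)
    qed
  qed
  have nn: "0 \<le> (\<integral>t. F t ^ a * (1 - F t) ^ b * (f t)\<^sup>2 \<partial>lborel)"
    using F_nonneg F_le1 by (intro integral_nonneg_AE AE_I2) simp
  show ?thesis
  proof (rule ccontr)
    assume "\<not> ?thesis"
    with nn have "(\<integral>t. F t ^ a * (1 - F t) ^ b * (f t)\<^sup>2 \<partial>lborel) = 0" by simp
    then have "AE t in lborel. F t ^ a * (1 - F t) ^ b * (f t)\<^sup>2 = 0"
      using integral_nonneg_eq_0_iff_AE[OF i] F_nonneg F_le1 by simp
    then have "AE t in lborel. f t = 0" using Z0 Z1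
      by eventually_elim auto
    then have "(\<integral>t. f t \<partial>lborel) = 0" by (simp add: integral_eq_zero_AE)
    then show False using f_total by simp
  qed
qed

end


lemma abs3: "0 \<le> (A::real) \<Longrightarrow> \<bar>x\<bar> \<le> 1 \<Longrightarrow> \<bar>y\<bar> \<le> 1 \<Longrightarrow> \<bar>A * x * y\<bar> \<le> A"
proof -
  assume a: "0 \<le> A" "\<bar>x\<bar> \<le> 1" "\<bar>y\<bar> \<le> 1"
  have "\<bar>x\<bar> * \<bar>y\<bar> \<le> 1" using a by (intro mult_le_one) auto
  then have "A * (\<bar>x\<bar> * \<bar>y\<bar>) \<le> A * 1" using a by (intro mult_left_mono) auto
  then show ?thesis using a by (simp add: abs_mult mult.assoc)
qed

lemma gd_bound: "0 \<le> u \<Longrightarrow> u \<le> 1 \<Longrightarrow> \<bar>gd n r u\<bar> \<le> real (n - r) + real (r - 1)"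
proof -
  assume u: "0 \<le> u" "u \<le> 1"
  have p: "\<bar>u ^ k\<bar> \<le> 1" "\<bar>(1 - u) ^ k\<bar> \<le> 1" for k
    using u by (auto simp: power_abs intro!: power_le_one)
  have "\<bar>real (n - r) * u ^ (n - r - 1) * (1 - u) ^ (r - 1)\<bar> \<le> real (n - r)"
    using p[of "n - r - 1"] p[of "r - 1"] by (intro abs3) auto
  moreover have "\<bar>real (r - 1) * u ^ (n - r) * (1 - u) ^ (r - 2)\<bar> \<le> real (r - 1)"
    using p[of "n - r"] p[of "r - 2"] by (intro abs3) auto
  ultimately show ?thesis unfolding gd_def by linarith
qed

context dens begin

lemma int_gd:
  assumes f2: "integrable lborel (\<lambda>t. (f t)\<^sup>2)"
  shows "integrable lborel (\<lambda>t. gd n r (F t) * (f t)\<^sup>2)"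
proof (rule Bochner_Integration.integrable_bound)
  show "integrable lborel (\<lambda>t. (real (n - r) + real (r - 1)) * (f t)\<^sup>2)"
    using f2 by simp
  have Fm[measurable]: "F \<in> borel_measurable lborel" by (rule F_meas)
  note [measurable] = f_meas
  show "(\<lambda>t. gd n r (F t) * (f t)\<^sup>2) \<in> borel_measurable lborel"
    unfolding gd_def by measurable
  show "AE x in lborel. norm (gd n r (F x) * (f x)\<^sup>2) \<le> norm ((real (n - r) + real (r - 1)) * (f x)\<^sup>2)"
  proof (rule AE_I2)
    fix x
    have "\<bar>gd n r (F x)\<bar> \<le> real (n - r) + real (r - 1)"
      using gd_bound F_nonneg F_le1 by blast
    then show "norm (gd n r (F x) * (f x)\<^sup>2) \<le> norm ((real (n - r) + real (r - 1)) * (f x)\<^sup>2)"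
      by (simp add: abs_mult mult_right_mono)
  qed
qed

lemma beta_eq: "beta n F f r = real ((n - 1) choose (r - 1)) * (\<integral>t. gd n r (F t) * (f t)\<^sup>2 \<partial>lborel)"
  unfolding beta_def deriv_g ..

lemma sumB:
  assumes f2: "integrable lborel (\<lambda>t. (f t)\<^sup>2)"
  shows "(\<Sum>r=1..k. beta n F f r) = (\<integral>t. TT n k (F t) * (f t)\<^sup>2 \<partial>lborel)"
proof -
  have "(\<Sum>r=1..k. beta n F f r) = (\<Sum>r=1..k. \<integral>t. real ((n - 1) choose (r - 1)) * gd n r (F t) * (f t)\<^sup>2 \<partial>lborel)"
    unfolding beta_eq by (simp add: mult.assoc)
  also have "\<dots> = (\<integral>t. (\<Sum>r=1..k. real ((n - 1) choose (r - 1)) * gd n r (F t) * (f t)\<^sup>2) \<partial>lborel)"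
    by (rule Bochner_Integration.integral_sum[symmetric])
       (simp add: mult.assoc int_gd[OF f2])
  also have "\<dots> = (\<integral>t. TT n k (F t) * (f t)\<^sup>2 \<partial>lborel)"
    by (simp only: sum_distrib_right[symmetric] sum_tele)
  finally show ?thesis .
qed

end

theorem corollary1:
  fixes n s :: nat and F f c c' :: "real \<Rightarrow> real" and xbar :: real
  assumes n2: "n \<ge> 2"
    and s_range: "1 \<le> s" "s \<le> n - 1"
    and f_meas: "f \<in> borel_measurable lborel"
    and f_nonneg: "\<forall>t. 0 \<le> f t"
    and f_int: "integrable lborel f"
    and f_total: "(\<integral>t. f t \<partial>lborel) = 1"
    and F_cdf: "\<forall>x. F x = (LINT t:{..x}|lborel. f t)"
    and f2_int: "integrable lborel (\<lambda>t. (f t)\<^sup>2)"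
    and xbar_pos: "0 < xbar"
    and c_mono: "strict_mono_on {0..xbar} c"
    and c_deriv: "\<forall>x\<in>{0..xbar}. (c has_real_derivative c' x) (at x within {0..xbar})"
    and c_convex: "strict_convex_on_real {0..xbar} c"
    and c0: "c 0 = 0" and c'0: "c' 0 = 0"
    and c_xbar: "c xbar = 1"
  shows
    "(2 * s < n \<longrightarrow>
        strict_antimono_on {0..1} (M n F f (vs s)) \<and>
        (\<forall>\<theta>1 \<theta>2 x1 x2. \<theta>1 \<in> {0..1} \<and> \<theta>2 \<in> {0..1} \<and> \<theta>1 < \<theta>2 \<and>
           x1 \<in> {0..xbar} \<and> x2 \<in> {0..xbar} \<and>
           c' x1 = M n F f (vs s) \<theta>1 \<and> c' x2 = M n F f (vs s) \<theta>2 \<longrightarrow> x2 < x1))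
     \<and>
     (2 * s > n \<longrightarrow>
        strict_mono_on {0..1} (M n F f (vs s)) \<and>
        (\<forall>\<theta>1 \<theta>2 x1 x2. \<theta>1 \<in> {0..1} \<and> \<theta>2 \<in> {0..1} \<and> \<theta>1 < \<theta>2 \<and>
           x1 \<in> {0..xbar} \<and> x2 \<in> {0..xbar} \<and>
           c' x1 = M n F f (vs s) \<theta>1 \<and> c' x2 = M n F f (vs s) \<theta>2 \<longrightarrow> x1 < x2))"
proof -
  interpret dens F f using f_meas f_nonneg f_int f_total F_cdf by unfold_locales
  have conv: "convex_on {0..xbar} c" by (rule strict_imp_convex[OF c_convex])
  have cm: "\<And>x y. x \<in> {0..xbar} \<Longrightarrow> y \<in> {0..xbar} \<Longrightarrow> x < y \<Longrightarrow> c' x \<le> c' y"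
    using cderiv_mono[OF conv c_deriv] by blast
  have sn: "1 \<le> s" "s < n" using s_range n2 by auto
  define Bs where "Bs = (\<Sum>r=1..s. beta n F f r)"
  have Bn: "(\<Sum>r=1..n. beta n F f r) = 0" using sumB[OF f2_int, of n n] by (simp add: TT_n)
  have Bs_pos: "0 < Bs"
  proof -
    have "Bs = (\<integral>t. (real s * real ((n - 1) choose s)) * (F t ^ (n - 1 - s) * (1 - F t) ^ (s - 1) * (f t)\<^sup>2) \<partial>lborel)"
      unfolding Bs_def sumB[OF f2_int] TT_def by (simp add: mult.assoc)
    also have "\<dots> = (real s * real ((n - 1) choose s)) * (\<integral>t. F t ^ (n - 1 - s) * (1 - F t) ^ (s - 1) * (f t)\<^sup>2 \<partial>lborel)"
      by (rule integral_mult_right_zero)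
    finally have e: "Bs = \<dots>" .
    have "0 < real s * real ((n - 1) choose s)" using sn by simp
    then show ?thesis unfolding e using pos[OF f2_int] by simp
  qed
  have Lv: "L n F f (vs s) = - (1 / real n) * (0 - Bs + real (n - s) * Bs / real s)"
    unfolding L_def double_sum[OF sn] Bn Bs_def ..
  have Rv: "R n F f (vs s) = Bs / real s"
    unfolding R_def Bs_def using R_vs sn by simp
  define K where "K = - (Bs * (real n - 2 * real s)) / (real n * real s)"
  have LK: "L n F f (vs s) = K"
  proof -
    have "real (n - s) = real n - real s" using sn by simp
    moreover have "real n \<noteq> 0" "real s \<noteq> 0" using sn by auto
    ultimately show ?thesis unfolding Lv K_def by (simp add: field_simps)
  qed
  have Mf: "M n F f (vs s) = (\<lambda>\<theta>. Bs / real s + \<theta> * K)"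
    unfolding M_def[abs_def] Rv LK ..
  have np: "0 < real n * real s" using sn by simp
  show ?thesis
  proof (intro conjI impI)
    assume h: "2 * s < n"
    have "0 < Bs * (real n - 2 * real s)" using Bs_pos h by simp
    then have K: "K < 0" unfolding K_def using np by (simp add: divide_pos_pos)
    show "strict_antimono_on {0..1} (M n F f (vs s))"
      unfolding Mf by (rule monotone_onI) (use K in \<open>simp add: mult_strict_right_mono_neg\<close>)
    show "\<forall>\<theta>1 \<theta>2 x1 x2. \<theta>1 \<in> {0..1} \<and> \<theta>2 \<in> {0..1} \<and> \<theta>1 < \<theta>2 \<and>
           x1 \<in> {0..xbar} \<and> x2 \<in> {0..xbar} \<and>
           c' x1 = M n F f (vs s) \<theta>1 \<and> c' x2 = M n F f (vs s) \<theta>2 \<longrightarrow> x2 < x1"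
    proof (intro allI impI, elim conjE)
      fix \<theta>1 \<theta>2 x1 x2
      assume a: "\<theta>1 \<in> {0..1}" "\<theta>2 \<in> {0..1}" "\<theta>1 < \<theta>2" "x1 \<in> {0..xbar}" "x2 \<in> {0..xbar}"
        "c' x1 = M n F f (vs s) \<theta>1" "c' x2 = M n F f (vs s) \<theta>2"
      have "c' x2 < c' x1" using a(3,6,7) K unfolding Mf by (simp add: mult_strict_right_mono_neg)
      then show "x2 < x1" using cm[OF a(4,5)] by (smt (verit))
    qed
  next
    assume h: "2 * s > n"
    have "Bs * (real n - 2 * real s) < 0" using Bs_pos h by (simp add: mult_pos_neg)
    then have K: "K > 0" unfolding K_def using np by (simp add: divide_neg_pos)
    show "strict_mono_on {0..1} (M n F f (vs s))"
      unfolding Mf by (rule monotone_onI) (use K in \<open>simp add: mult_strict_right_mono\<close>)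
    show "\<forall>\<theta>1 \<theta>2 x1 x2. \<theta>1 \<in> {0..1} \<and> \<theta>2 \<in> {0..1} \<and> \<theta>1 < \<theta>2 \<and>
           x1 \<in> {0..xbar} \<and> x2 \<in> {0..xbar} \<and>
           c' x1 = M n F f (vs s) \<theta>1 \<and> c' x2 = M n F f (vs s) \<theta>2 \<longrightarrow> x1 < x2"
    proof (intro allI impI, elim conjE)
      fix \<theta>1 \<theta>2 x1 x2
      assume a: "\<theta>1 \<in> {0..1}" "\<theta>2 \<in> {0..1}" "\<theta>1 < \<theta>2" "x1 \<in> {0..xbar}" "x2 \<in> {0..xbar}"
        "c' x1 = M n F f (vs s) \<theta>1" "c' x2 = M n F f (vs s) \<theta>2"
      have "c' x1 < c' x2" using a(3,6,7) K unfolding Mf by (simp add: mult_strict_right_mono)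
      then show "x1 < x2" using cm[OF a(5,4)] by (smt (verit))
    qed
  qed
qed

end
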